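(* Let $L$ be a sublattice of $A_n$ of rank $n$. For every $p\in L$, the Voronoi cell $V_\triangle(p)$ equals $\mathrm{pr}_0\big(\{x\in\mathbb R^{n+1}:x\le p\}\cap\partial\Sigma^c(L)\big)$. Consequently the Voronoi diagram of $L$ under $d_\triangle$ is the projection of $\partial\Sigma^c(L)$ onto $H_0$ along $(1,\dots,1)$.
   Context: Let $n\ge 1$, $H_0=\{x\in\mathbb R^{n+1}:\sum_i x_i=0\}$ and $A_n=H_0\cap\mathbb Z^{n+1}$. For $x\in\mathbb R^{n+1}$, $\deg(x)=\sum_i x_i$, and $\mathrm{pr}_0(x)=x-\frac{\deg(x)}{n+1}(1,\dots,1)$. Write $x\le y$ iff $x_i\le y_i$ for all $i$. Let $\Sigma^{\mathbb R}(L)=\{x\in\mathbb R^{n+1}: x\not\le q\text{ for all }q\in L\}$ and let $\Sigma^c(L)$ be its topological closure in $\mathbb R^{n+1}$. For $p,q\in H_0$ let $d_\triangle(p,q)=\max_i(p_i-q_i)$. For $p\in L$, the Voronoi cell is $V_\triangle(p)=\{x\in H_0: d_\triangle(x,p)\le d_\triangle(x,p')\ \forall p'\in L\}$. *)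

theory Defs
  imports "HOL-Analysis.Analysis"
begin

text \<open>Ambient space R^(n+1) is real^'n with CARD('n) = n+1.\<close>

definition vleq :: "real^'n \<Rightarrow> real^'n \<Rightarrow> bool" where
  "vleq x y \<longleftrightarrow> (\<forall>i. x$i \<le> y$i)"

definition deg :: "real^'n \<Rightarrow> real" where
  "deg x = (\<Sum>i\<in>UNIV. x$i)"

definition H0 :: "(real^'n) set" where
  "H0 = {x. deg x = 0}"

definition A_lat :: "(real^'n) set" where
  "A_lat = {x \<in> H0. \<forall>i. x$i \<in> \<int>}"

definition pr0 :: "real^'n \<Rightarrow> real^'n" where
  "pr0 x = x - (deg x / real CARD('n)) *\<^sub>R (\<chi> i. 1)"

definition SigmaR :: "(real^'n) set \<Rightarrow> (real^'n) set" where
  "SigmaR L = {x. \<forall>q\<in>L. \<not> vleq x q}"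

definition SigmaC :: "(real^'n) set \<Rightarrow> (real^'n) set" where
  "SigmaC L = closure (SigmaR L)"

definition d_tri :: "real^'n \<Rightarrow> real^'n \<Rightarrow> real" where
  "d_tri p q = Max (range (\<lambda>i. p$i - q$i))"

definition voronoi :: "(real^'n) set \<Rightarrow> real^'n \<Rightarrow> (real^'n) set" where
  "voronoi L p = {x \<in> H0. \<forall>p'\<in>L. d_tri x p \<le> d_tri x p'}"

text \<open>Sublattice of A_n: additive subgroup contained in A_n; rank = dimension of its span.\<close>
definition sublattice_An :: "(real^'n) set \<Rightarrow> bool" where
  "sublattice_An L \<longleftrightarrow> L \<subseteq> A_lat \<and> 0 \<in> L \<and>
     (\<forall>x\<in>L. \<forall>y\<in>L. x + y \<in> L) \<and> (\<forall>x\<in>L. - x \<in> L)"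

end

theory Submission
  imports Defs
begin

lemma d_tri_le: "d_tri (x::real^'n) p \<le> t \<longleftrightarrow> (\<forall>i. x$i - p$i \<le> t)"
  unfolding d_tri_def by (subst Max_le_iff) auto

lemma d_tri_ge: "t \<le> d_tri (x::real^'n) p \<longleftrightarrow> (\<exists>i. t \<le> x$i - p$i)"
  unfolding d_tri_def by (subst Max_ge_iff) auto

lemma d_tri_shift: "d_tri (x - c *\<^sub>R (\<chi> i. 1)) p = d_tri (x::real^'n) p - c"
proof -
  have "\<And>t. d_tri (x - c *\<^sub>R (\<chi> i. 1)) p \<le> t \<longleftrightarrow> d_tri x p - c \<le> t"
  proof -
    fix t
    have "d_tri x p - c \<le> t \<longleftrightarrow> d_tri x p \<le> t + c" by linarith
    then show "d_tri (x - c *\<^sub>R (\<chi> i. 1)) p \<le> t \<longleftrightarrow> d_tri x p - c \<le> t"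
      by (simp add: d_tri_le algebra_simps)
  qed
  then show ?thesis by (meson order_refl order_antisym)
qed

lemma d_tri_neg: "d_tri (y::real^'n) q < 0 \<Longrightarrow> \<forall>i. y$i < q$i"
proof -
  assume "d_tri y q < 0"
  then have "\<not> 0 \<le> d_tri y q" by linarith
  then have "\<not> (\<exists>i. 0 \<le> y$i - q$i)" using d_tri_ge[of 0 y q] by blast
  then show ?thesis by (metis diff_ge_0_iff_ge not_le)
qed

lemma deg_shift: "deg (x - c *\<^sub>R (\<chi> i. 1)) = deg (x::real^'n) - c * real CARD('n)"
  unfolding deg_def by (simp add: sum_subtractf)

lemma open_lt: "open {z::real^'n. \<forall>i. z$i < q$i}"
proof -
  have "{z::real^'n. \<forall>i. z$i < q$i} = (\<Inter>i\<in>UNIV. {z. z$i < q$i})" by auto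
  moreover have "open (\<Inter>i\<in>UNIV. {z::real^'n. z$i < q$i})"
    by (intro open_INT ballI open_Collect_less continuous_intros) auto
  ultimately show ?thesis by simp
qed

lemma open_nle: "open {z::real^'n. \<not> vleq z q}"
  unfolding vleq_def
  by (intro open_Collect_neg closed_Collect_all closed_Collect_le continuous_intros)

lemma SigmaC_char: "SigmaC (L::(real^'n) set) = {y. \<forall>q\<in>L. \<not>(\<forall>i. y$i < q$i)}"
proof (intro equalityI subsetI)
  fix y assume y: "y \<in> SigmaC L"
  show "y \<in> {y. \<forall>q\<in>L. \<not>(\<forall>i. y$i < q$i)}"
  proof (rule CollectI, intro ballI notI)
    fix q assume q: "q \<in> L" "\<forall>i. y$i < q$i"
    let ?U = "{z::real^'n. \<forall>i. z$i < q$i}"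
    have "?U \<inter> SigmaR L = {}" using q(1)
      by (auto simp: SigmaR_def vleq_def less_imp_le)
    hence "?U \<inter> closure (SigmaR L) = {}" using open_Int_closure_eq_empty[OF open_lt] by blast
    with y q(2) show False by (auto simp: SigmaC_def)
  qed
next
  fix y assume "y \<in> {y. \<forall>q\<in>L. \<not>(\<forall>i. y$i < q$i)}"
  hence y: "\<forall>q\<in>L. \<not>(\<forall>i. y$i < q$i)" by simp
  show "y \<in> SigmaC L" unfolding SigmaC_def closure_approachable
  proof (intro allI impI)
    fix e :: real assume e: "e > 0"
    define oneV where "oneV = ((\<chi> i. 1) :: real^'n)"
    define d where "d = e / (2*(norm oneV + 1))"
    have np: "norm oneV \<ge> 0" by simp
    have "2*(norm oneV+1) > 0" using np by (smt (verit))
  hence dp: "d > 0" unfolding d_def using e by simp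
    have "d * norm oneV \<le> e / 2"
    proof -
      have "d * norm oneV = (e/2) * (norm oneV / (norm oneV + 1))" by (simp add: d_def)
      also have "\<dots> \<le> (e/2) * 1"
      proof (rule mult_left_mono)
        have "norm oneV + 1 > 0" using np by linarith
        then show "norm oneV / (norm oneV + 1) \<le> 1" by (simp add: divide_le_eq_1)
        show "0 \<le> e/2" using e by simp
      qed
      finally show ?thesis by simp
    qed
    hence dist: "dist (y + d *\<^sub>R oneV) y < e" using e dp by (simp add: dist_norm)
    have "y + d *\<^sub>R oneV \<in> SigmaR L"
      unfolding SigmaR_def vleq_def
    proof (intro CollectI ballI notI)
      fix q assume q: "q \<in> L" and le: "\<forall>i. (y + d *\<^sub>R oneV) $ i \<le> q $ i"
      have "\<forall>i. y$i < q$i"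
      proof
        fix i from le[rule_format, of i] dp show "y$i < q$i" by (simp add: oneV_def)
      qed
      with y q show False by blast
    qed
    with dist show "\<exists>z\<in>SigmaR L. dist z y < e" by blast
  qed
qed

lemma not_interior: assumes p: "p \<in> L" and le: "vleq y p"
  shows "y \<notin> interior (SigmaC (L::(real^'n) set))"
proof
  assume "y \<in> interior (SigmaC L)"
  then obtain e where e: "e > 0" "ball y e \<subseteq> SigmaC L" using mem_interior by blast
  define oneV where "oneV = ((\<chi> i. 1) :: real^'n)"
  define d where "d = e / (2*(norm oneV + 1))"
  have np: "norm oneV \<ge> 0" by simp
  have "2*(norm oneV+1) > 0" using np by (smt (verit))
  hence dp: "d > 0" unfolding d_def using e by simp
  have "d * norm oneV \<le> e / 2"
  proof -
    have "d * norm oneV = (e/2) * (norm oneV / (norm oneV + 1))" by (simp add: d_def)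
    also have "\<dots> \<le> (e/2) * 1"
      proof (rule mult_left_mono)
        have "norm oneV + 1 > 0" using np by linarith
        then show "norm oneV / (norm oneV + 1) \<le> 1" by (simp add: divide_le_eq_1)
        show "0 \<le> e/2" using e by simp
      qed
    finally show ?thesis by simp
  qed
  hence "dist y (y - d *\<^sub>R oneV) < e" using e dp by (simp add: dist_norm)
  hence "y - d *\<^sub>R oneV \<in> SigmaC L" using e by auto
  moreover have "\<forall>i. (y - d *\<^sub>R oneV)$i < p$i" 
  proof
    fix i have "y$i \<le> p$i" using le by (simp add: vleq_def)
    then show "(y - d *\<^sub>R oneV)$i < p$i" using dp by (simp add: oneV_def)
  qed
  ultimately show False using p by (auto simp: SigmaC_char)
qed


lemma finite_vec_bounded: assumes "finite (S::real set)"
  shows "finite {q::real^'n. \<forall>i. q$i \<in> S}"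
proof -
  have "{q::real^'n. \<forall>i. q$i \<in> S} \<subseteq> vec_lambda ` (PiE UNIV (\<lambda>_. S))"
  proof
    fix q :: "real^'n" assume "q \<in> {q. \<forall>i. q$i \<in> S}"
    then show "q \<in> vec_lambda ` (PiE UNIV (\<lambda>_. S))"
      by (intro image_eqI[of _ _ "vec_nth q"]) auto
  qed
  moreover have "finite (vec_lambda ` (PiE (UNIV::'n set) (\<lambda>_. S)))"
    using assms by (intro finite_imageI finite_PiE) auto
  ultimately show ?thesis by (rule finite_subset)
qed

lemma SigmaR_open: assumes LA: "L \<subseteq> (A_lat :: (real^'n) set)" shows "open (SigmaR L)"
proof (rule open_subopen[THEN iffD2], intro ballI)
  fix y assume y: "y \<in> SigmaR L"
  define R where "R = 2*(\<Sum>j\<in>UNIV. \<bar>y$j\<bar>) + real CARD('n)"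
  define Q where "Q = {q\<in>L. \<forall>i. y$i - 1 \<le> q$i}"
  have QS: "Q \<subseteq> {q. \<forall>i. q$i \<in> of_int ` {-\<lceil>R\<rceil>..\<lceil>R\<rceil>}}"
  proof
    fix q assume q: "q \<in> Q"
    hence qL: "q \<in> L" and qb: "\<forall>i. y$i - 1 \<le> q$i" by (auto simp: Q_def)
    from qL LA have dq: "deg q = 0" and qi: "\<forall>i. q$i \<in> \<int>"
      by (auto simp: A_lat_def H0_def)
    show "q \<in> {q. \<forall>i. q$i \<in> of_int ` {-\<lceil>R\<rceil>..\<lceil>R\<rceil>}}"
    proof (rule CollectI, rule allI)
      fix i
      have sabs: "\<bar>y$i\<bar> \<le> (\<Sum>j\<in>UNIV. \<bar>y$j\<bar>)" by (rule member_le_sum) auto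
      have s2: "\<bar>\<Sum>j\<in>UNIV. y$j\<bar> \<le> (\<Sum>j\<in>UNIV. \<bar>y$j\<bar>)" by (rule sum_abs)
      have c1: "real CARD('n) \<ge> 1" by simp
      have "q$i - (y$i - 1) \<le> (\<Sum>j\<in>UNIV. q$j - (y$j - 1))"
        by (rule member_le_sum) (use qb in auto)
      also have "(\<Sum>j\<in>UNIV. q$j - (y$j - 1)) = (\<Sum>j\<in>UNIV. q$j) - (\<Sum>j\<in>UNIV. y$j) + real CARD('n)"
        by (simp add: sum_subtractf sum.distrib)
      also have "\<dots> = - (\<Sum>j\<in>UNIV. y$j) + real CARD('n)" using dq by (simp add: deg_def)
      finally have up: "q$i \<le> R" using sabs s2 unfolding R_def by linarith
      have sn: "(\<Sum>j\<in>UNIV. \<bar>y$j\<bar>) \<ge> 0" by (rule sum_nonneg) auto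
      have lo: "-R \<le> q$i" using qb[rule_format, of i] sabs c1 sn abs_ge_minus_self[of "y$i"]
        unfolding R_def by linarith
      obtain k where qk: "q$i = of_int k" using qi[rule_format, of i] by (auto elim: Ints_cases)
      have "real_of_int k \<le> real_of_int \<lceil>R\<rceil>" using up qk le_of_int_ceiling[of R] by linarith
      hence k1: "k \<le> \<lceil>R\<rceil>" by (simp only: of_int_le_iff)
      have "real_of_int (-k) \<le> real_of_int \<lceil>R\<rceil>" unfolding of_int_minus using lo qk le_of_int_ceiling[of R] by linarith
      hence k2: "-k \<le> \<lceil>R\<rceil>" by (simp only: of_int_le_iff)
      have "k \<in> {-\<lceil>R\<rceil>..\<lceil>R\<rceil>}" using k1 k2 by simp
      then show "q$i \<in> of_int ` {-\<lceil>R\<rceil>..\<lceil>R\<rceil>}" unfolding qk by (rule imageI)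
    qed
  qed
  have fQ: "finite Q" by (rule finite_subset[OF QS finite_vec_bounded]) auto
  define T where "T = ball y 1 \<inter> (\<Inter>q\<in>Q. {z. \<not> vleq z q})"
  have "open T" unfolding T_def using fQ by (intro open_Int open_ball open_INT ballI open_nle)
  moreover have "y \<in> T" using y by (auto simp: T_def Q_def SigmaR_def)
  moreover have "T \<subseteq> SigmaR L"
  proof
    fix z assume z: "z \<in> T"
    show "z \<in> SigmaR L" unfolding SigmaR_def
    proof (rule CollectI, intro ballI notI)
      fix q assume qL: "q \<in> L" and zq: "vleq z q"
      have "\<forall>i. y$i - 1 \<le> q$i"
      proof
        fix i
        have "\<bar>(y - z)$i\<bar> \<le> norm (y - z)" by (rule component_le_norm_cart)
        moreover have "norm (y - z) < 1" using z by (simp add: T_def dist_norm)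
        moreover have "z$i \<le> q$i" using zq by (simp add: vleq_def)
        ultimately show "y$i - 1 \<le> q$i" by simp
      qed
      with qL have "q \<in> Q" by (simp add: Q_def)
      with z zq show False by (auto simp: T_def)
    qed
  qed
  ultimately show "\<exists>T. open T \<and> y \<in> T \<and> T \<subseteq> SigmaR L" by blast
qed


lemma d_tri_strict: "\<forall>i. (y::real^'n)$i < q$i \<Longrightarrow> d_tri y q < 0"
proof -
  assume h: "\<forall>i. y$i < q$i"
  obtain i where "d_tri y q \<le> y$i - q$i" using d_tri_ge[of "d_tri y q" y q] by auto
  with h[rule_format, of i] show ?thesis by linarith
qed

lemma pr0_eq: "pr0 (y::real^'n) = y - (deg y / real CARD('n)) *\<^sub>R (\<chi> i. 1)"
  by (simp add: pr0_def)

lemma vor_char: assumes p: "p \<in> L"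
  shows "voronoi L p = pr0 ` {y. vleq y p \<and> y \<in> SigmaC (L::(real^'n) set)}"
proof (intro equalityI subsetI)
  fix x assume x: "x \<in> voronoi L p"
  hence xH: "deg x = 0" and xd: "\<forall>p'\<in>L. d_tri x p \<le> d_tri x p'"
    by (auto simp: voronoi_def H0_def)
  define c where "c = d_tri x p"
  define y where "y = x - c *\<^sub>R ((\<chi> i. 1) :: real^'n)"
  have "d_tri y p \<le> 0" by (simp add: y_def d_tri_shift c_def)
  hence yp: "vleq y p" by (simp add: d_tri_le vleq_def)
  have yC: "y \<in> SigmaC L" unfolding SigmaC_char
  proof (rule CollectI, intro ballI notI)
    fix q assume q: "q \<in> L" and lt: "\<forall>i. y$i < q$i"
    have "d_tri y q < 0" using d_tri_strict[OF lt] .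
    moreover have "d_tri y q = d_tri x q - c" by (simp add: y_def d_tri_shift)
    moreover have "c \<le> d_tri x q" using xd q by (simp add: c_def)
    ultimately show False by linarith
  qed
  have "deg y = - c * real CARD('n)" by (simp add: y_def deg_shift xH)
  hence "deg y / real CARD('n) = - c" by simp
  hence "pr0 y = x" by (simp add: pr0_eq y_def)
  with yp yC show "x \<in> pr0 ` {y. vleq y p \<and> y \<in> SigmaC L}" by blast
next
  fix x assume "x \<in> pr0 ` {y. vleq y p \<and> y \<in> SigmaC L}"
  then obtain y where yp: "vleq y p" and yC: "y \<in> SigmaC L" and xy: "x = pr0 y" by blast
  define c where "c = deg y / real CARD('n)"
  have xe: "x = y - c *\<^sub>R ((\<chi> i. 1) :: real^'n)" by (simp add: xy pr0_eq c_def)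
  have "deg x = deg y - c * real CARD('n)" by (simp add: xe deg_shift)
  hence "deg x = 0" by (simp add: c_def)
  moreover have "\<forall>p'\<in>L. d_tri x p \<le> d_tri x p'"
  proof
    fix q assume q: "q \<in> L"
    have "d_tri y p \<le> 0" using yp by (simp add: d_tri_le vleq_def)
    moreover have "\<not> d_tri y q < 0" using yC q d_tri_neg[of y q] by (auto simp: SigmaC_char)
    ultimately show "d_tri x p \<le> d_tri x q" by (simp add: xe d_tri_shift)
  qed
  ultimately show "x \<in> voronoi L p" by (simp add: voronoi_def H0_def)
qed

lemma frontier_le: assumes p: "p \<in> L" and le: "vleq y p"
  shows "y \<in> frontier (SigmaC (L::(real^'n) set)) \<longleftrightarrow> y \<in> SigmaC L"
  using not_interior[OF p le] unfolding frontier_def SigmaC_def by simp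

lemma frontier_down: assumes LA: "L \<subseteq> (A_lat :: (real^'n) set)"
    and y: "y \<in> frontier (SigmaC L)"
  shows "\<exists>q\<in>L. vleq y q"
proof -
  have "SigmaR L \<subseteq> interior (SigmaC L)" unfolding SigmaC_def
    by (rule interior_maximal[OF closure_subset SigmaR_open[OF LA]])
  moreover have "y \<notin> interior (SigmaC L)" using y by (simp add: frontier_def)
  ultimately have "y \<notin> SigmaR L" by blast
  then show ?thesis by (simp add: SigmaR_def)
qed

theorem mainTheorem11:
  fixes L :: "(real^'n) set"
  assumes "CARD('n) \<ge> 2"
    and "sublattice_An L"
    and "dim L = CARD('n) - 1"
  shows "(\<forall>p\<in>L. voronoi L p = pr0 ` ({x. vleq x p} \<inter> frontier (SigmaC L)))
         \<and> (\<Union>p\<in>L. voronoi L p) = pr0 ` frontier (SigmaC L)"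
proof -
  have LA: "L \<subseteq> A_lat" using assms(2) by (simp add: sublattice_An_def)
  have P1: "\<forall>p\<in>L. voronoi L p = pr0 ` ({x. vleq x p} \<inter> frontier (SigmaC L))"
  proof
    fix p assume p: "p \<in> L"
    have "{x. vleq x p} \<inter> frontier (SigmaC L) = {y. vleq y p \<and> y \<in> SigmaC L}"
      using frontier_le[OF p] by blast
    then show "voronoi L p = pr0 ` ({x. vleq x p} \<inter> frontier (SigmaC L))"
      using vor_char[OF p] by simp
  qed
  have "(\<Union>p\<in>L. voronoi L p) = (\<Union>p\<in>L. pr0 ` ({x. vleq x p} \<inter> frontier (SigmaC L)))"
    using P1 by simp
  also have "\<dots> = pr0 ` (\<Union>p\<in>L. {x. vleq x p} \<inter> frontier (SigmaC L))" by blast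
  also have "(\<Union>p\<in>L. {x. vleq x p} \<inter> frontier (SigmaC L)) = frontier (SigmaC L)"
    using frontier_down[OF LA] by blast
  finally show ?thesis using P1 by simp
qed

end
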